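(* Let $q\ge 3$ be a prime power and let $P\subseteq[0,q-2]^n$ and $Q\subseteq[0,q-2]^m$ be integral convex polytopes. Then the join $P*Q\subseteq[0,q-2]^{n+m+1}$ satisfies $$N(P*Q)=\max\Big\{(q-1)^{n+m},\ N(P)(q-1)^{m+1},\ N(Q)(q-1)^{n+1},\ (q-1)N(P)N(Q)+\big((q-1)^n-N(P)\big)\big((q-1)^m-N(Q)\big)\Big\},$$ and consequently $$\delta(P*Q)=\min\Big\{1-\tfrac{1}{q-1},\ \delta(P),\ \delta(Q),\ \delta(P)+\delta(Q)-\delta(P)\delta(Q)\tfrac{q}{q-1}\Big\}.$$
   Context: The join of integral convex polytopes $P\subseteq\mathbb{R}^n$ and $Q\subseteq\mathbb{R}^m$ is $P*Q=\mathrm{conv}\big(\{(p,\mathbf{0}^m,0):p\in P\}\cup\{(\mathbf{0}^n,y,1):y\in Q\}\big)\subseteq\mathbb{R}^{n+m+1}$. For an integral convex polytope $P\subseteq[0,q-2]^n$, $\mathcal{L}_P=\mathrm{span}_{\mathbb{F}_q}\{x^p: p\in P\cap\mathbb{Z}^n\}$, $N(P)=\max_{0\neq f\in\mathcal{L}_P}|Z(f)|$ where $Z(f)$ is the set of zeros of $f$ in $(\mathbb{F}_q^\times)^n$, and $\delta(P)=\big((q-1)^n-N(P)\big)/(q-1)^n$ (computed with respect to the ambient dimension of the polytope; e.g. $(q-1)^{n+m+1}$ for $P*Q$). *)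

theory Defs
  imports "HOL-Analysis.Analysis"
begin

text \<open>Points of R^n are represented as functions nat => real that vanish at
  all indices >= n.  Exponent vectors in Z^n_{>=0} are functions nat => nat
  vanishing at indices >= n.\<close>

definition supp_lt :: "nat \<Rightarrow> (nat \<Rightarrow> 'b::zero) \<Rightarrow> bool" where
  "supp_lt n x \<longleftrightarrow> (\<forall>i\<ge>n. x i = 0)"

definition conv :: "(nat \<Rightarrow> real) set \<Rightarrow> (nat \<Rightarrow> real) set" where
  "conv S = {x. \<exists>F w. finite F \<and> F \<noteq> {} \<and> F \<subseteq> S \<and> (\<forall>v\<in>F. 0 \<le> w v) \<and>
                  sum w F = 1 \<and> x = (\<lambda>i. \<Sum>v\<in>F. w v * v i)}"

definition int_points :: "nat \<Rightarrow> (nat \<Rightarrow> real) set" where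
  "int_points n = {x. supp_lt n x \<and> (\<forall>i. x i \<in> \<int>)}"

definition integral_polytope :: "nat \<Rightarrow> (nat \<Rightarrow> real) set \<Rightarrow> bool" where
  "integral_polytope n P \<longleftrightarrow> (\<exists>V. finite V \<and> V \<noteq> {} \<and> V \<subseteq> int_points n \<and> P = conv V)"

definition box :: "nat \<Rightarrow> nat \<Rightarrow> (nat \<Rightarrow> real) set" where
  "box q n = {x. supp_lt n x \<and> (\<forall>i<n. 0 \<le> x i \<and> x i \<le> real q - 2)}"

text \<open>Join P*Q in R^{n+m+1}: coordinates 0..n-1 for P, n..n+m-1 for Q, n+m the extra one.\<close>
definition embL :: "nat \<Rightarrow> (nat \<Rightarrow> real) \<Rightarrow> (nat \<Rightarrow> real)" where
  "embL n p = (\<lambda>i. if i < n then p i else 0)"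

definition embR :: "nat \<Rightarrow> nat \<Rightarrow> (nat \<Rightarrow> real) \<Rightarrow> (nat \<Rightarrow> real)" where
  "embR n m y = (\<lambda>i. if i < n then 0 else if i < n + m then y (i - n)
                     else if i = n + m then 1 else 0)"

definition join :: "nat \<Rightarrow> nat \<Rightarrow> (nat \<Rightarrow> real) set \<Rightarrow> (nat \<Rightarrow> real) set \<Rightarrow> (nat \<Rightarrow> real) set" where
  "join n m P Q = conv (embL n ` P \<union> embR n m ` Q)"

text \<open>Lattice points P \<inter> Z^n (as exponent vectors; they are nonnegative since P lies in the box).\<close>
definition lattice_pts :: "nat \<Rightarrow> (nat \<Rightarrow> real) set \<Rightarrow> (nat \<Rightarrow> nat) set" where
  "lattice_pts n P = {p. supp_lt n p \<and> (\<lambda>i. real (p i)) \<in> P}"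

text \<open>An element of L_P is given by its coefficient function c, supported on the lattice
  points of P (monomials x^p with distinct p are linearly independent, so f = 0 iff c = 0).\<close>
definition LP_coeffs :: "'a itself \<Rightarrow> nat \<Rightarrow> (nat \<Rightarrow> real) set \<Rightarrow> ((nat \<Rightarrow> nat) \<Rightarrow> 'a::field) set" where
  "LP_coeffs _ n P = {c. \<forall>p. p \<notin> lattice_pts n P \<longrightarrow> c p = 0}"

definition poly_eval :: "nat \<Rightarrow> (nat \<Rightarrow> real) set \<Rightarrow> ((nat \<Rightarrow> nat) \<Rightarrow> 'a::field) \<Rightarrow> (nat \<Rightarrow> 'a) \<Rightarrow> 'a" where
  "poly_eval n P c x = (\<Sum>p\<in>lattice_pts n P. c p * (\<Prod>i<n. x i ^ p i))"

definition torus :: "nat \<Rightarrow> (nat \<Rightarrow> 'a::field) set" where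
  "torus n = {x. supp_lt n x \<and> (\<forall>i<n. x i \<noteq> 0)}"

definition zeros :: "nat \<Rightarrow> (nat \<Rightarrow> real) set \<Rightarrow> ((nat \<Rightarrow> nat) \<Rightarrow> 'a::field) \<Rightarrow> (nat \<Rightarrow> 'a) set" where
  "zeros n P c = {x \<in> torus n. poly_eval n P c x = 0}"

definition Nmax :: "'a::{finite,field} itself \<Rightarrow> nat \<Rightarrow> (nat \<Rightarrow> real) set \<Rightarrow> nat" where
  "Nmax T n P = Max {card (zeros n P c) | c. c \<in> LP_coeffs T n P \<and> (\<exists>p. c p \<noteq> 0)}"

definition delta :: "'a::{finite,field} itself \<Rightarrow> nat \<Rightarrow> (nat \<Rightarrow> real) set \<Rightarrow> real" where
  "delta T n P = (real ((CARD('a) - 1) ^ n) - real (Nmax T n P)) / real ((CARD('a) - 1) ^ n)"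

end

theory Submission
  imports Defs
begin

lemma conv_sub: "S \<subseteq> conv S"
proof
  fix x assume "x \<in> S"
  then show "x \<in> conv S" unfolding conv_def
    by (intro CollectI exI[of _ "{x}"] exI[of _ "\<lambda>_. 1::real"]) auto
qed

lemma conv_comb:
  assumes F: "finite F" "F \<noteq> {}" and w: "\<forall>v\<in>F. 0 \<le> w v" "sum w F = 1"
    and ph: "\<forall>v\<in>F. \<phi> v \<in> conv S"
  shows "(\<lambda>i. \<Sum>v\<in>F. w v * \<phi> v i) \<in> conv S"
proof -
  define Q where "Q v Gu \<longleftrightarrow> finite (fst Gu) \<and> fst Gu \<noteq> {} \<and> fst Gu \<subseteq> S \<and> (\<forall>s\<in>fst Gu. 0 \<le> snd Gu s) \<and>
                  sum (snd Gu) (fst Gu) = 1 \<and> \<phi> v = (\<lambda>i. \<Sum>s\<in>fst Gu. snd Gu s * s i)" for v Gu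
  have "\<forall>v\<in>F. \<exists>Gu. Q v Gu"
  proof
    fix v assume "v \<in> F"
    then have "\<phi> v \<in> conv S" using ph by blast
    then obtain G u where "finite G \<and> G \<noteq> {} \<and> G \<subseteq> S \<and> (\<forall>s\<in>G. 0 \<le> u s) \<and>
                  sum u G = 1 \<and> \<phi> v = (\<lambda>i. \<Sum>s\<in>G. u s * s i)"
      unfolding conv_def by (elim CollectE exE) blast
    then have "Q v (G, u)" unfolding Q_def by simp
    then show "\<exists>Gu. Q v Gu" ..
  qed
  then obtain f where f: "\<forall>v\<in>F. Q v (f v)" by (rule bchoice[elim_format]) blast
  define GG where "GG v = fst (f v)" for v
  define UU where "UU v = snd (f v)" for v
  have GU: "finite (GG v) \<and> GG v \<noteq> {} \<and> GG v \<subseteq> S \<and> (\<forall>s\<in>GG v. 0 \<le> UU v s) \<and>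
                  sum (UU v) (GG v) = 1 \<and> \<phi> v = (\<lambda>i. \<Sum>s\<in>GG v. UU v s * s i)" if "v \<in> F" for v
    using f that unfolding Q_def GG_def UU_def by blast
  define G where "G = \<Union>(GG ` F)"
  define u' where "u' v s = (if s \<in> GG v then UU v s else 0)" for v s
  define W where "W s = (\<Sum>v\<in>F. w v * u' v s)" for s
  have GUf: "finite (GG v)" and GUne: "GG v \<noteq> {}" and GUS: "GG v \<subseteq> S"
    and GUnn: "\<forall>s\<in>GG v. 0 \<le> UU v s" and GUs: "sum (UU v) (GG v) = 1"
    and GUphi: "\<phi> v = (\<lambda>i. \<Sum>s\<in>GG v. UU v s * s i)" if "v \<in> F" for v
    using GU[OF that] by blast+
  have finG: "finite G" unfolding G_def using F(1) GUf by blast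
  obtain v0 where v0: "v0 \<in> F" using F(2) by blast
  have Gne: "G \<noteq> {}" unfolding G_def using v0 GUne[OF v0] by blast
  have GS: "G \<subseteq> S" unfolding G_def using GUS by blast
  have Wnn: "\<forall>s\<in>G. 0 \<le> W s"
  proof
    fix s assume "s \<in> G"
    have "0 \<le> w v * u' v s" if "v \<in> F" for v
    proof -
      have "0 \<le> u' v s" unfolding u'_def using GUnn[OF that] by simp
      then show ?thesis using w(1) that by simp
    qed
    then show "0 \<le> W s" unfolding W_def by (rule sum_nonneg)
  qed
  have inner: "(\<Sum>s\<in>G. u' v s * ff s) = (\<Sum>s\<in>GG v. UU v s * ff s)" if "v \<in> F" for v ff
  proof -
    have "(\<Sum>s\<in>G. u' v s * ff s) = (\<Sum>s\<in>G. if s \<in> GG v then UU v s * ff s else 0)"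
      unfolding u'_def by (rule sum.cong) auto
    also have "\<dots> = (\<Sum>s\<in>G \<inter> GG v. UU v s * ff s)" using finG by (rule sum.inter_restrict[symmetric])
    also have "G \<inter> GG v = GG v" using that unfolding G_def by auto
    finally show ?thesis .
  qed
  have sw: "(\<Sum>s\<in>G. \<Sum>v\<in>F. w v * u' v s * h s) = (\<Sum>v\<in>F. w v * (\<Sum>s\<in>G. u' v s * h s))" for h :: "(nat \<Rightarrow> real) \<Rightarrow> real"
  proof -
    have "(\<Sum>s\<in>G. \<Sum>v\<in>F. w v * u' v s * h s) = (\<Sum>v\<in>F. \<Sum>s\<in>G. w v * u' v s * h s)"
      by (rule sum.swap)
    also have "\<dots> = (\<Sum>v\<in>F. w v * (\<Sum>s\<in>G. u' v s * h s))"
      by (simp only: sum_distrib_left mult.assoc)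
    finally show ?thesis .
  qed
  have "sum W G = (\<Sum>s\<in>G. \<Sum>v\<in>F. w v * u' v s * 1)"
    unfolding W_def by simp
  also have "\<dots> = (\<Sum>v\<in>F. w v * (\<Sum>s\<in>G. u' v s * 1))" by (rule sw)
  also have "\<dots> = (\<Sum>v\<in>F. w v)"
  proof (rule sum.cong)
    fix v assume v: "v \<in> F"
    have "(\<Sum>s\<in>G. u' v s * 1) = (\<Sum>s\<in>GG v. UU v s * 1)" by (rule inner[OF v])
    also have "\<dots> = 1" using GUs[OF v] by simp
    finally show "w v * (\<Sum>s\<in>G. u' v s * 1) = w v" by simp
  qed simp
  finally have sW: "sum W G = 1" using w by simp
  have "(\<lambda>i. \<Sum>v\<in>F. w v * \<phi> v i) = (\<lambda>i. \<Sum>s\<in>G. W s * s i)"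
  proof
    fix i
    have "(\<Sum>v\<in>F. w v * \<phi> v i) = (\<Sum>v\<in>F. w v * (\<Sum>s\<in>G. u' v s * s i))"
      using inner GUphi by (intro sum.cong) auto
    also have "\<dots> = (\<Sum>s\<in>G. \<Sum>v\<in>F. w v * u' v s * s i)" by (rule sw[symmetric])
    also have "\<dots> = (\<Sum>s\<in>G. W s * s i)" unfolding W_def by (simp only: sum_distrib_right)
    finally show "(\<Sum>v\<in>F. w v * \<phi> v i) = (\<Sum>s\<in>G. W s * s i)" .
  qed
  then show ?thesis unfolding conv_def
    by (intro CollectI exI[of _ G] exI[of _ W] conjI) (use finG Gne GS Wnn sW in auto)
qed

lemma finite_supp_box:
  assumes "finite B"
  shows "finite {x :: nat \<Rightarrow> 'b::zero. supp_lt n x \<and> (\<forall>i<n. x i \<in> B)}"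
proof (induction n)
  case 0
  have "{x :: nat \<Rightarrow> 'b. supp_lt 0 x \<and> (\<forall>i<0. x i \<in> B)} \<subseteq> {\<lambda>_. 0}"
    by (auto simp: supp_lt_def)
  then show ?case by (rule finite_subset) simp
next
  case (Suc n)
  let ?S = "\<lambda>n. {x :: nat \<Rightarrow> 'b. supp_lt n x \<and> (\<forall>i<n. x i \<in> B)}"
  have "?S (Suc n) \<subseteq> (\<lambda>(x,z). x(n:=z)) ` (?S n \<times> B)"
  proof
    fix x assume x: "x \<in> ?S (Suc n)"
    have "x = (\<lambda>(x,z). x(n:=z)) (x(n:=0), x n)" by simp
    moreover have "(x(n:=0), x n) \<in> ?S n \<times> B" using x by (auto simp: supp_lt_def)
    ultimately show "x \<in> (\<lambda>(x,z). x(n:=z)) ` (?S n \<times> B)" by blast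
  qed
  moreover have "finite ((\<lambda>(x,z). x(n:=z)) ` (?S n \<times> B))" using Suc assms by simp
  ultimately show ?case by (rule finite_subset)
qed

lemma finite_torus: "finite (torus n :: (nat \<Rightarrow> 'a::{finite,field}) set)"
proof -
  have "torus n \<subseteq> {x :: nat \<Rightarrow> 'a. supp_lt n x \<and> (\<forall>i<n. x i \<in> UNIV)}"
    by (auto simp: torus_def)
  then show ?thesis using finite_supp_box[of "UNIV :: 'a set" n] by (rule finite_subset) simp
qed

lemma finite_lattice:
  assumes "P \<subseteq> box q n"
  shows "finite (lattice_pts n P)"
proof -
  have "lattice_pts n P \<subseteq> {p :: nat \<Rightarrow> nat. supp_lt n p \<and> (\<forall>i<n. p i \<in> {..q})}"
  proof
    fix p assume "p \<in> lattice_pts n P"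
    then have "supp_lt n p" "(\<lambda>i. real (p i)) \<in> box q n" using assms by (auto simp: lattice_pts_def)
    then show "p \<in> {p :: nat \<Rightarrow> nat. supp_lt n p \<and> (\<forall>i<n. p i \<in> {..q})}"
      by (auto simp: box_def)
  qed
  then show ?thesis using finite_supp_box[of "{..q}" n] by (rule finite_subset) simp
qed

lemma lattice_supp: "p \<in> lattice_pts n P \<Longrightarrow> supp_lt n p"
  by (simp add: lattice_pts_def)

definition Phi :: "nat \<Rightarrow> nat \<Rightarrow> ((nat \<Rightarrow> 'a) \<times> (nat \<Rightarrow> 'a)) \<times> 'a \<Rightarrow> (nat \<Rightarrow> 'a::zero)" where
  "Phi n m t = (\<lambda>i. if i < n then fst (fst t) i else if i < n + m then snd (fst t) (i - n)
                    else if i = n + m then snd t else 0)"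

definition Psi :: "nat \<Rightarrow> nat \<Rightarrow> (nat \<Rightarrow> 'a::zero) \<Rightarrow> ((nat \<Rightarrow> 'a) \<times> (nat \<Rightarrow> 'a)) \<times> 'a" where
  "Psi n m x = (((\<lambda>i. if i < n then x i else 0), (\<lambda>j. if j < m then x (n + j) else 0)), x (n + m))"

lemma Phi_bij:
  "bij_betw (Phi n m) ((torus n \<times> torus m) \<times> {z::'a::field. z \<noteq> 0}) (torus (n + m + 1))"
proof (rule bij_betw_byWitness[where f' = "Psi n m"])
  show "\<forall>t\<in>(torus n \<times> torus m) \<times> {z::'a. z \<noteq> 0}. Psi n m (Phi n m t) = t"
  proof
    fix t :: "((nat \<Rightarrow> 'a) \<times> (nat \<Rightarrow> 'a)) \<times> 'a"
    assume t: "t \<in> (torus n \<times> torus m) \<times> {z::'a. z \<noteq> 0}"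
    obtain a b z where abz: "t = ((a, b), z)" by (metis prod.collapse)
    have a: "supp_lt n a" and b: "supp_lt m b" using t abz by (auto simp: torus_def)
    have "(\<lambda>i. if i < n then Phi n m ((a,b),z) i else 0) = a"
      using a by (auto simp: Phi_def abz supp_lt_def)
    moreover have "(\<lambda>j. if j < m then Phi n m ((a,b),z) (n + j) else 0) = b"
      using b by (auto simp: Phi_def abz supp_lt_def)
    moreover have "Phi n m ((a,b),z) (n + m) = z" by (simp add: Phi_def)
    ultimately show "Psi n m (Phi n m t) = t" unfolding abz by (simp add: Psi_def)
  qed
  show "\<forall>x\<in>torus (n + m + 1). Phi n m (Psi n m x) = (x :: nat \<Rightarrow> 'a)"
  proof
    fix x :: "nat \<Rightarrow> 'a" assume x: "x \<in> torus (n + m + 1)"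
    show "Phi n m (Psi n m x) = x"
    proof
      fix i show "Phi n m (Psi n m x) i = x i"
        using x by (auto simp: Phi_def Psi_def torus_def supp_lt_def)
    qed
  qed
  show "Phi n m ` ((torus n \<times> torus m) \<times> {z::'a. z \<noteq> 0}) \<subseteq> torus (n + m + 1)"
    by (auto simp: Phi_def torus_def supp_lt_def split: if_split_asm)
  show "Psi n m ` torus (n + m + 1) \<subseteq> (torus n \<times> torus m) \<times> {z::'a. z \<noteq> 0}"
    by (auto simp: Psi_def torus_def supp_lt_def)
qed

lemma card_nonzero: "card {z::'a::{finite,field}. z \<noteq> 0} = CARD('a) - 1"
proof -
  have "{z::'a. z \<noteq> 0} = UNIV - {0}" by auto
  then show ?thesis by (simp add: card_Diff_singleton)
qed

lemma torus0: "torus 0 = {(\<lambda>_. 0)}"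
  by (auto simp: torus_def supp_lt_def)

lemma card_torus: "card (torus n :: (nat \<Rightarrow> 'a::{finite,field}) set) = (CARD('a) - 1) ^ n"
proof (induction n)
  case 0
  then show ?case by (simp add: torus0)
next
  case (Suc n)
  have "card (((torus n :: (nat \<Rightarrow> 'a) set) \<times> (torus 0 :: (nat \<Rightarrow> 'a) set)) \<times> {z::'a. z \<noteq> 0}) = card (torus (n + 0 + 1) :: (nat \<Rightarrow> 'a) set)"
    using Phi_bij[of n 0] by (rule bij_betw_same_card)
  then have "card (torus (Suc n) :: (nat \<Rightarrow> 'a) set) = card (((torus n :: (nat \<Rightarrow> 'a) set) \<times> (torus 0 :: (nat \<Rightarrow> 'a) set)) \<times> {z::'a. z \<noteq> 0})"
    by simp
  also have "\<dots> = card (torus n :: (nat \<Rightarrow> 'a) set) * (CARD('a) - 1)"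
    by (simp add: card_cartesian_product torus0 card_nonzero)
  finally show ?case using Suc by simp
qed

definition shf :: "nat \<Rightarrow> nat \<Rightarrow> (nat \<Rightarrow> nat) \<Rightarrow> nat \<Rightarrow> nat" where
  "shf n m y = (\<lambda>i. if i < n then 0 else if i < n + m then y (i - n) else if i = n + m then 1 else 0)"

lemma real_shf: "(\<lambda>i. real (shf n m y i)) = embR n m (\<lambda>j. real (y j))"
  by (auto simp: shf_def embR_def)

lemma box_supp: "x \<in> box q n \<Longrightarrow> supp_lt n x"
  by (simp add: box_def)

lemma lattice_join:
  assumes P: "integral_polytope n P" "P \<subseteq> box q n"
    and Q: "integral_polytope m Q" "Q \<subseteq> box q m"
  shows "lattice_pts (n + m + 1) (join n m P Q) = lattice_pts n P \<union> shf n m ` lattice_pts m Q"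
proof
  obtain VP where VP: "P = conv VP" using P(1) by (auto simp: integral_polytope_def)
  obtain VQ where VQ: "Q = conv VQ" using Q(1) by (auto simp: integral_polytope_def)
  define L where "L = embL n ` P"
  define R where "R = embR n m ` Q"
  show "lattice_pts (n + m + 1) (join n m P Q) \<subseteq> lattice_pts n P \<union> shf n m ` lattice_pts m Q"
  proof
    fix r assume "r \<in> lattice_pts (n + m + 1) (join n m P Q)"
    then have rs: "supp_lt (n + m + 1) r" and "(\<lambda>i. real (r i)) \<in> conv (L \<union> R)"
      by (auto simp: lattice_pts_def join_def L_def R_def)
    then have "\<exists>F w. finite F \<and> F \<noteq> {} \<and> F \<subseteq> L \<union> R \<and> (\<forall>v\<in>F. 0 \<le> w v) \<and> sum w F = 1 \<and>
       (\<lambda>i. real (r i)) = (\<lambda>i. \<Sum>v\<in>F. w v * v i)" by (simp add: conv_def)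
    then obtain F w where F: "finite F" "F \<noteq> {}" "F \<subseteq> L \<union> R" and w: "\<forall>v\<in>F. 0 \<le> w v" "sum w F = 1"
      and req: "(\<lambda>i. real (r i)) = (\<lambda>i. \<Sum>v\<in>F. w v * v i)"
      by (elim exE conjE)
    have ri: "real (r i) = (\<Sum>v\<in>F. w v * v i)" for i using req by metis
    have vR1: "v (n + m) = 1" if "v \<in> R" for v using that by (auto simp: R_def embR_def)
    have vL0: "v (n + m) = 0" if "v \<in> L" for v using that by (auto simp: L_def embL_def)
    have vnm: "v (n + m) = (if v \<in> R then 1 else 0)" if "v \<in> F" for v
    proof (cases "v \<in> R")
      case True then show ?thesis using vR1 by simp
    next
      case False then have "v \<in> L" using that F(3) by blast
      then show ?thesis using vL0 False by simp
    qed
    have "real (r (n + m)) = (\<Sum>v\<in>F. if v \<in> R then w v else 0)"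
      unfolding ri by (rule sum.cong) (auto simp: vnm)
    also have "\<dots> = sum w (F \<inter> R)" using F(1) by (rule sum.inter_restrict[symmetric])
    finally have s1: "real (r (n + m)) = sum w (F \<inter> R)" .
    have split: "sum w F = sum w (F \<inter> R) + sum w (F - R)"
      using F(1) by (simp add: sum.Int_Diff)
    have nn1: "0 \<le> sum w (F \<inter> R)" and nn2: "0 \<le> sum w (F - R)"
      using w(1) by (auto intro!: sum_nonneg)
    have "real (r (n + m)) \<le> 1" using s1 split w(2) nn2 by linarith
    then have "r (n + m) = 0 \<or> r (n + m) = 1" by linarith
    then show "r \<in> lattice_pts n P \<union> shf n m ` lattice_pts m Q"
    proof
      assume r0: "r (n + m) = 0"
      then have "sum w (F \<inter> R) = 0" using s1 by simp
      then have wz: "\<forall>v\<in>F \<inter> R. w v = 0" using F(1) w(1) sum_nonneg_eq_0_iff[of "F \<inter> R" w] by auto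
      have sw1: "sum w (F - R) = 1" using split w(2) \<open>sum w (F \<inter> R) = 0\<close> by simp
      then have Fne: "F - R \<noteq> {}" by (metis sum.empty zero_neq_one)
      have ri': "real (r i) = (\<Sum>v\<in>F - R. w v * v i)" for i
      proof -
        have "real (r i) = (\<Sum>v\<in>F \<inter> R. w v * v i) + (\<Sum>v\<in>F - R. w v * v i)"
          unfolding ri using F(1) by (simp add: sum.Int_Diff)
        also have "(\<Sum>v\<in>F \<inter> R. w v * v i) = 0" using wz by simp
        finally show ?thesis by simp
      qed
      have inP: "\<forall>v\<in>F - R. (\<lambda>v. v) v \<in> conv VP"
      proof
        fix v assume "v \<in> F - R"
        then have "v \<in> L" using F(3) by auto
        then obtain p where p: "p \<in> P" "v = embL n p" by (auto simp: L_def)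
        have "supp_lt n p" using p(1) P(2) by (auto intro: box_supp)
        then have "v = p" unfolding p(2) by (auto simp: embL_def supp_lt_def)
        then show "(\<lambda>v. v) v \<in> conv VP" using p(1) VP by simp
      qed
      have "(\<lambda>i. \<Sum>v\<in>F - R. w v * (\<lambda>v. v) v i) \<in> conv VP"
        by (rule conv_comb) (use F(1) Fne w(1) sw1 inP in auto)
      moreover have "(\<lambda>i. real (r i)) = (\<lambda>i. \<Sum>v\<in>F - R. w v * (\<lambda>v. v) v i)"
        using ri' by simp
      ultimately have rP: "(\<lambda>i. real (r i)) \<in> P" using VP by simp
      then have "supp_lt n r" using P(2) box_supp[of "\<lambda>i. real (r i)" q n] by (auto simp: supp_lt_def)
      then show ?thesis using rP by (simp add: lattice_pts_def)
    next
      assume r1: "r (n + m) = 1"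
      then have "sum w (F \<inter> R) = 1" using s1 by simp
      then have "sum w (F - R) = 0" using split w(2) by simp
      then have wz: "\<forall>v\<in>F - R. w v = 0" using F(1) w(1) sum_nonneg_eq_0_iff[of "F - R" w] by auto
      have sw1: "sum w (F \<inter> R) = 1" by fact
      then have Fne: "F \<inter> R \<noteq> {}" by (metis sum.empty zero_neq_one)
      have ri': "real (r i) = (\<Sum>v\<in>F \<inter> R. w v * v i)" for i
      proof -
        have "real (r i) = (\<Sum>v\<in>F \<inter> R. w v * v i) + (\<Sum>v\<in>F - R. w v * v i)"
          unfolding ri using F(1) by (simp add: sum.Int_Diff)
        also have "(\<Sum>v\<in>F - R. w v * v i) = 0" using wz by simp
        finally show ?thesis by simp
      qed
      define y where "y = (\<lambda>j. if j < m then r (n + j) else 0)"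
      define unR where "unR v = (\<lambda>j. if j < m then v (n + j) else (0::real))" for v :: "nat \<Rightarrow> real"
      have inQ: "\<forall>v\<in>F \<inter> R. unR v \<in> conv VQ"
      proof
        fix v assume "v \<in> F \<inter> R"
        then obtain yq where yq: "yq \<in> Q" "v = embR n m yq" by (auto simp: R_def)
        have "supp_lt m yq" using yq(1) Q(2) by (auto intro: box_supp)
        then have "unR v = yq" unfolding yq(2) unR_def by (auto simp: embR_def supp_lt_def)
        then show "unR v \<in> conv VQ" using yq(1) VQ by simp
      qed
      have "(\<lambda>j. \<Sum>v\<in>F \<inter> R. w v * unR v j) \<in> conv VQ"
        by (rule conv_comb) (use F(1) Fne w(1) sw1 inQ in auto)
      moreover have "(\<lambda>j. real (y j)) = (\<lambda>j. \<Sum>v\<in>F \<inter> R. w v * unR v j)"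
      proof
        fix j show "real (y j) = (\<Sum>v\<in>F \<inter> R. w v * unR v j)"
          by (cases "j < m") (simp_all add: y_def unR_def ri')
      qed
      ultimately have yQ: "y \<in> lattice_pts m Q" using VQ by (simp add: lattice_pts_def supp_lt_def y_def)
      have "r = shf n m y"
      proof
        fix i
        show "r i = shf n m y i"
        proof (cases "i < n")
          case True
          have "real (r i) = (\<Sum>v\<in>F \<inter> R. w v * v i)" by (rule ri')
          also have "\<dots> = 0" using True by (intro sum.neutral) (auto simp: R_def embR_def)
          finally show ?thesis using True by (simp add: shf_def)
        next
          case False
          then show ?thesis using r1 rs by (auto simp: shf_def y_def supp_lt_def)
        qed
      qed
      then show ?thesis using yQ by blast
    qed
  qed
  show "lattice_pts n P \<union> shf n m ` lattice_pts m Q \<subseteq> lattice_pts (n + m + 1) (join n m P Q)"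
  proof
    fix r assume "r \<in> lattice_pts n P \<union> shf n m ` lattice_pts m Q"
    then show "r \<in> lattice_pts (n + m + 1) (join n m P Q)"
    proof
      assume r: "r \<in> lattice_pts n P"
      then have rs: "supp_lt n r" and rP: "(\<lambda>i. real (r i)) \<in> P" by (auto simp: lattice_pts_def)
      have "(\<lambda>i. real (r i)) = embL n (\<lambda>i. real (r i))" using rs by (auto simp: embL_def supp_lt_def)
      then have "(\<lambda>i. real (r i)) \<in> L" using rP unfolding L_def by blast
      moreover have "L \<subseteq> conv (L \<union> R)" using conv_sub[of "L \<union> R"] by blast
      ultimately have "(\<lambda>i. real (r i)) \<in> conv (L \<union> R)" by blast
      then have "(\<lambda>i. real (r i)) \<in> join n m P Q" by (simp add: join_def L_def R_def)
      moreover have "supp_lt (n + m + 1) r" using rs by (simp add: supp_lt_def)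
      ultimately show ?thesis by (simp add: lattice_pts_def)
    next
      assume "r \<in> shf n m ` lattice_pts m Q"
      then obtain y where y: "y \<in> lattice_pts m Q" "r = shf n m y" by blast
      have "(\<lambda>i. real (r i)) \<in> R" unfolding y(2) real_shf R_def using y(1) by (auto simp: lattice_pts_def)
      moreover have "R \<subseteq> conv (L \<union> R)" using conv_sub[of "L \<union> R"] by blast
      ultimately have "(\<lambda>i. real (r i)) \<in> conv (L \<union> R)" by blast
      then have "(\<lambda>i. real (r i)) \<in> join n m P Q" by (simp add: join_def L_def R_def)
      moreover have "supp_lt (n + m + 1) r" unfolding y(2) by (simp add: supp_lt_def shf_def)
      ultimately show ?thesis by (simp add: lattice_pts_def)
    qed
  qed
qed

definition cL :: "nat \<Rightarrow> (nat \<Rightarrow> real) set \<Rightarrow> ((nat \<Rightarrow> nat) \<Rightarrow> 'a::zero) \<Rightarrow> (nat \<Rightarrow> nat) \<Rightarrow> 'a" where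
  "cL n P c = (\<lambda>p. if p \<in> lattice_pts n P then c p else 0)"

definition cR :: "nat \<Rightarrow> nat \<Rightarrow> (nat \<Rightarrow> real) set \<Rightarrow> ((nat \<Rightarrow> nat) \<Rightarrow> 'a::zero) \<Rightarrow> (nat \<Rightarrow> nat) \<Rightarrow> 'a" where
  "cR n m Q c = (\<lambda>y. if y \<in> lattice_pts m Q then c (shf n m y) else 0)"

lemma shf_inj: "inj_on (shf n m) {y. supp_lt m y}"
proof
  fix y1 y2 assume y: "y1 \<in> {y. supp_lt m y}" "y2 \<in> {y. supp_lt m y}" and e: "shf n m y1 = shf n m y2"
  show "y1 = y2"
  proof
    fix j show "y1 j = y2 j"
    proof (cases "j < m")
      case True
      have "shf n m y1 (n + j) = shf n m y2 (n + j)" using e by simp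
      then show ?thesis using True by (simp add: shf_def)
    next
      case False then show ?thesis using y by (simp add: supp_lt_def)
    qed
  qed
qed

lemma eval_join:
  fixes c :: "(nat \<Rightarrow> nat) \<Rightarrow> 'a::field"
  assumes LJ: "lattice_pts (n + m + 1) J = lattice_pts n P \<union> shf n m ` lattice_pts m Q"
    and fP: "finite (lattice_pts n P)" and fQ: "finite (lattice_pts m Q)"
  shows "poly_eval (n + m + 1) J c (Phi n m ((a, b), z)) =
         poly_eval n P (cL n P c) a + z * poly_eval m Q (cR n m Q c) b"
proof -
  let ?x = "Phi n m ((a, b), z)"
  let ?LP = "lattice_pts n P" and ?LQ = "lattice_pts m Q"
  let ?g = "\<lambda>p. c p * (\<Prod>i<n + m + 1. ?x i ^ p i)"
  have disj: "?LP \<inter> shf n m ` ?LQ = {}"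
  proof -
    have "p (n + m) = 0" if "p \<in> ?LP" for p using lattice_supp[OF that] by (simp add: supp_lt_def)
    moreover have "shf n m y (n + m) = 1" for y by (simp add: shf_def)
    ultimately show ?thesis by force
  qed
  have inj: "inj_on (shf n m) ?LQ"
    by (rule inj_on_subset[OF shf_inj]) (auto dest: lattice_supp)
  have "poly_eval (n + m + 1) J c ?x = sum ?g (?LP \<union> shf n m ` ?LQ)"
    unfolding poly_eval_def LJ ..
  also have "\<dots> = sum ?g ?LP + sum ?g (shf n m ` ?LQ)"
    using fP fQ disj by (simp add: sum.union_disjoint)
  also have "sum ?g (shf n m ` ?LQ) = sum (?g \<circ> shf n m) ?LQ"
    using inj by (rule sum.reindex)
  also have "sum ?g ?LP = poly_eval n P (cL n P c) a"
    unfolding poly_eval_def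
  proof (rule sum.cong)
    fix p assume p: "p \<in> ?LP"
    have sp: "supp_lt n p" by (rule lattice_supp[OF p])
    have "(\<Prod>i<n + m + 1. ?x i ^ p i) = (\<Prod>i<n. a i ^ p i)"
      by (rule prod.mono_neutral_cong_right) (use sp in \<open>auto simp: supp_lt_def Phi_def\<close>)
    then show "?g p = cL n P c p * (\<Prod>i<n. a i ^ p i)" using p by (simp add: cL_def)
  qed simp
  also have "sum (?g \<circ> shf n m) ?LQ = z * poly_eval m Q (cR n m Q c) b"
    unfolding poly_eval_def sum_distrib_left
  proof (rule sum.cong)
    fix y assume y: "y \<in> ?LQ"
    have sy: "supp_lt m y" by (rule lattice_supp[OF y])
    let ?h = "\<lambda>i. ?x i ^ shf n m y i"
    have "(\<Prod>i<n + m + 1. ?h i) = (\<Prod>i<n + m. ?h i) * ?h (n + m)"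
      by simp
    also have "?h (n + m) = z" by (simp add: Phi_def shf_def)
    also have "(\<Prod>i<n + m. ?h i) = (\<Prod>i\<in>{n..<n + m}. ?h i)"
      by (rule prod.mono_neutral_cong_right) (auto simp: shf_def)
    also have "\<dots> = (\<Prod>i\<in>{0 + n..<m + n}. ?h i)" by (simp add: add.commute)
    also have "\<dots> = (\<Prod>j\<in>{0..<m}. ?h (j + n))" by (rule prod.shift_bounds_nat_ivl)
    also have "\<dots> = (\<Prod>j<m. b j ^ y j)"
      by (rule prod.cong) (auto simp: Phi_def shf_def)
    finally show "(?g \<circ> shf n m) y = z * (cR n m Q c y * (\<Prod>j<m. b j ^ y j))"
      using y by (simp add: cR_def mult_ac)
  qed simp
  finally show ?thesis .
qed

definition cnt :: "nat \<Rightarrow> 'a::field \<Rightarrow> 'a \<Rightarrow> nat" where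
  "cnt k g h = k * of_bool (g = 0) * of_bool (h = 0) + of_bool (g \<noteq> 0) * of_bool (h \<noteq> 0)"

lemma card_z: "card {z::'a::{finite,field}. z \<noteq> 0 \<and> g + z * h = 0} = cnt (CARD('a) - 1) g h"
proof (cases "g = 0")
  case True
  show ?thesis
  proof (cases "h = 0")
    case True
    then have "{z::'a. z \<noteq> 0 \<and> g + z * h = 0} = {z. z \<noteq> 0}" using \<open>g = 0\<close> by auto
    then show ?thesis using True \<open>g = 0\<close> by (simp add: card_nonzero cnt_def)
  next
    case False
    then have "{z::'a. z \<noteq> 0 \<and> g + z * h = 0} = {}" using \<open>g = 0\<close> by auto
    then show ?thesis using False \<open>g = 0\<close> by (simp add: cnt_def)
  qed
next
  case False
  show ?thesis
  proof (cases "h = 0")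
    case True
    then have "{z::'a. z \<noteq> 0 \<and> g + z * h = 0} = {}" using \<open>g \<noteq> 0\<close> by auto
    then show ?thesis using True \<open>g \<noteq> 0\<close> by (simp add: cnt_def)
  next
    case hF: False
    have eqv: "g + z * h = 0 \<longleftrightarrow> z = - g / h" for z
    proof
      assume "g + z * h = 0" then have "z * h = - g" by (simp add: add_eq_0_iff)
      then have "z * h / h = - g / h" by simp
      then show "z = - g / h" using hF by simp
    next
      assume "z = - g / h" then have "z * h = - g" using hF by simp
      then show "g + z * h = 0" by (simp add: add_eq_0_iff)
    qed
    have "{z::'a. z \<noteq> 0 \<and> g + z * h = 0} = {- g / h}"
      using hF \<open>g \<noteq> 0\<close> eqv by auto
    then show ?thesis using hF \<open>g \<noteq> 0\<close> by (simp add: cnt_def)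
  qed
qed

lemma dsum:
  fixes f g f' g' :: "'b \<Rightarrow> nat"
  shows "(\<Sum>a\<in>A. \<Sum>b\<in>B. k * f a * g b + f' a * g' b) = k * sum f A * sum g B + sum f' A * sum g' B"
proof -
  have 1: "(\<Sum>a\<in>A. \<Sum>b\<in>B. k * f a * g b + f' a * g' b) = (\<Sum>a\<in>A. k * f a * sum g B + f' a * sum g' B)"
  proof (rule sum.cong[OF refl])
    fix a
    show "(\<Sum>b\<in>B. k * f a * g b + f' a * g' b) = k * f a * sum g B + f' a * sum g' B"
      by (simp only: sum.distrib sum_distrib_left)
  qed
  have 2: "(\<Sum>a\<in>A. k * f a * sum g B + f' a * sum g' B) = (\<Sum>a\<in>A. k * f a) * sum g B + sum f' A * sum g' B"
    by (simp only: sum.distrib sum_distrib_right)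
  have 3: "(\<Sum>a\<in>A. k * f a) = k * sum f A" by (simp only: sum_distrib_left)
  show ?thesis using 1 2 3 by simp
qed

lemma card_zeros_join:
  fixes c :: "(nat \<Rightarrow> nat) \<Rightarrow> 'a::{finite,field}"
  assumes LJ: "lattice_pts (n + m + 1) J = lattice_pts n P \<union> shf n m ` lattice_pts m Q"
    and fP: "finite (lattice_pts n P)" and fQ: "finite (lattice_pts m Q)"
  shows "card (zeros (n + m + 1) J c) =
     (CARD('a) - 1) * card (zeros n P (cL n P c)) * card (zeros m Q (cR n m Q c))
     + (card (torus n :: (nat \<Rightarrow> 'a) set) - card (zeros n P (cL n P c)))
       * (card (torus m :: (nat \<Rightarrow> 'a) set) - card (zeros m Q (cR n m Q c)))"
proof -
  define G where "G a = poly_eval n P (cL n P c) a" for a :: "nat \<Rightarrow> 'a"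
  define H where "H b = poly_eval m Q (cR n m Q c) b" for b :: "nat \<Rightarrow> 'a"
  define Tn where "Tn = (torus n :: (nat \<Rightarrow> 'a) set)"
  define Tm where "Tm = (torus m :: (nat \<Rightarrow> 'a) set)"
  define X where "X = ((Tn \<times> Tm) \<times> {z::'a. z \<noteq> 0})"
  define Y where "Y = (SIGMA ab:Tn \<times> Tm. {z::'a. z \<noteq> 0 \<and> G (fst ab) + z * H (snd ab) = 0})"
  have YX: "Y \<subseteq> X" by (auto simp: X_def Y_def)
  have ev: "poly_eval (n + m + 1) J c (Phi n m t) = G (fst (fst t)) + snd t * H (snd (fst t))" for t
  proof -
    show ?thesis using eval_join[OF LJ fP fQ, of c "fst (fst t)" "snd (fst t)" "snd t"]
      by (simp add: G_def H_def)
  qed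
  have bij: "bij_betw (Phi n m) X (torus (n + m + 1))" unfolding X_def Tn_def Tm_def by (rule Phi_bij)
  have img: "Phi n m ` Y = zeros (n + m + 1) J c"
  proof
    show "Phi n m ` Y \<subseteq> zeros (n + m + 1) J c"
    proof
      fix x assume "x \<in> Phi n m ` Y"
      then obtain t where t: "t \<in> Y" "x = Phi n m t" by blast
      have "x \<in> torus (n + m + 1)" using t YX bij_betw_apply[OF bij] by blast
      moreover have "poly_eval (n + m + 1) J c x = 0" using t ev by (auto simp: Y_def)
      ultimately show "x \<in> zeros (n + m + 1) J c" by (simp add: zeros_def)
    qed
    show "zeros (n + m + 1) J c \<subseteq> Phi n m ` Y"
    proof
      fix x assume x: "x \<in> zeros (n + m + 1) J c"
      then have "x \<in> torus (n + m + 1)" by (simp add: zeros_def)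
      then obtain t where t: "t \<in> X" "x = Phi n m t" using bij_betw_imp_surj_on[OF bij] by blast
      have "poly_eval (n + m + 1) J c x = 0" using x by (simp add: zeros_def)
      then have "t \<in> Y" using t ev by (auto simp: X_def Y_def)
      then show "x \<in> Phi n m ` Y" using t by blast
    qed
  qed
  have "card (zeros (n + m + 1) J c) = card Y"
    using bij_betw_same_card[OF bij_betw_subset[OF bij YX img]] by simp
  also have "card Y = (\<Sum>ab\<in>Tn \<times> Tm. card {z::'a. z \<noteq> 0 \<and> G (fst ab) + z * H (snd ab) = 0})"
    unfolding Y_def by (rule card_SigmaI) (simp_all add: Tn_def Tm_def finite_torus)
  also have "\<dots> = (\<Sum>ab\<in>Tn \<times> Tm. cnt (CARD('a) - 1) (G (fst ab)) (H (snd ab)))"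
    by (rule sum.cong) (simp_all add: card_z)
  also have "\<dots> = (\<Sum>a\<in>Tn. \<Sum>b\<in>Tm. cnt (CARD('a) - 1) (G a) (H b))"
    by (simp only: sum.cartesian_product' fst_conv snd_conv)
  also have "\<dots> = (CARD('a) - 1) * (\<Sum>a\<in>Tn. of_bool (G a = 0)) * (\<Sum>b\<in>Tm. of_bool (H b = 0))
                 + (\<Sum>a\<in>Tn. of_bool (G a \<noteq> 0)) * (\<Sum>b\<in>Tm. of_bool (H b \<noteq> 0))"
    unfolding cnt_def by (rule dsum)
  also have "(\<Sum>a\<in>Tn. of_bool (G a = 0)) = card (zeros n P (cL n P c))"
  proof -
    have "Tn \<inter> {a. G a = 0} = zeros n P (cL n P c)" by (auto simp: Tn_def zeros_def G_def)
    then show ?thesis using sum_of_bool_eq[of Tn "\<lambda>a. G a = 0"] by (simp add: Tn_def finite_torus)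
  qed
  also have "(\<Sum>b\<in>Tm. of_bool (H b = 0)) = card (zeros m Q (cR n m Q c))"
  proof -
    have "Tm \<inter> {b. H b = 0} = zeros m Q (cR n m Q c)" by (auto simp: Tm_def zeros_def H_def)
    then show ?thesis using sum_of_bool_eq[of Tm "\<lambda>b. H b = 0"] by (simp add: Tm_def finite_torus)
  qed
  also have "(\<Sum>a\<in>Tn. of_bool (G a \<noteq> 0)) = card Tn - card (zeros n P (cL n P c))"
  proof -
    have "Tn \<inter> {a. G a \<noteq> 0} = Tn - zeros n P (cL n P c)" by (auto simp: Tn_def zeros_def G_def)
    then have "(\<Sum>a\<in>Tn. of_bool (G a \<noteq> 0)) = card (Tn - zeros n P (cL n P c))"
      using sum_of_bool_eq[of Tn "\<lambda>a. G a \<noteq> 0"] by (simp add: Tn_def finite_torus)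
    also have "\<dots> = card Tn - card (zeros n P (cL n P c))"
      by (rule card_Diff_subset) (auto simp: Tn_def zeros_def intro: finite_subset[OF _ finite_torus])
    finally show ?thesis .
  qed
  also have "(\<Sum>b\<in>Tm. of_bool (H b \<noteq> 0)) = card Tm - card (zeros m Q (cR n m Q c))"
  proof -
    have "Tm \<inter> {b. H b \<noteq> 0} = Tm - zeros m Q (cR n m Q c)" by (auto simp: Tm_def zeros_def H_def)
    then have "(\<Sum>b\<in>Tm. of_bool (H b \<noteq> 0)) = card (Tm - zeros m Q (cR n m Q c))"
      using sum_of_bool_eq[of Tm "\<lambda>b. H b \<noteq> 0"] by (simp add: Tm_def finite_torus)
    also have "\<dots> = card Tm - card (zeros m Q (cR n m Q c))"
      by (rule card_Diff_subset) (auto simp: Tm_def zeros_def intro: finite_subset[OF _ finite_torus])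
    finally show ?thesis .
  qed
  finally show ?thesis by (simp add: Tn_def Tm_def)
qed

lemma zeros_sub: "zeros n P c \<subseteq> torus n"
  by (auto simp: zeros_def)

lemma card_zeros_le: "card (zeros n P (c :: (nat \<Rightarrow> nat) \<Rightarrow> 'a::{finite,field})) \<le> (CARD('a) - 1) ^ n"
proof -
  have "card (zeros n P c) \<le> card (torus n :: (nat \<Rightarrow> 'a) set)"
    by (rule card_mono[OF finite_torus zeros_sub])
  then show ?thesis by (simp add: card_torus)
qed

lemma zeros_zero: "zeros n P (\<lambda>_. 0 :: 'a::field) = torus n"
  by (auto simp: zeros_def poly_eval_def)

lemma Nmax_props:
  assumes fin: "finite (lattice_pts n P)" and ne: "lattice_pts n P \<noteq> {}"
  shows "\<And>c. c \<in> LP_coeffs TYPE('a::{finite,field}) n P \<Longrightarrow> (\<exists>p. c p \<noteq> 0) \<Longrightarrow>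
            card (zeros n P c) \<le> Nmax TYPE('a) n P"
    and "\<exists>c. c \<in> LP_coeffs TYPE('a) n P \<and> (\<exists>p. c p \<noteq> 0) \<and> card (zeros n P c) = Nmax TYPE('a) n P"
    and "\<exists>c. c \<in> LP_coeffs TYPE('a) n P \<and> (\<exists>p. c p \<noteq> 0) \<and> card (zeros n P c) = 0"
    and "Nmax TYPE('a) n P \<le> (CARD('a) - 1) ^ n"
proof -
  define S where "S = {card (zeros n P c) | c. c \<in> LP_coeffs TYPE('a) n P \<and> (\<exists>p. c p \<noteq> 0)}"
  have NS: "Nmax TYPE('a) n P = Max S" by (simp add: Nmax_def S_def)
  have Ssub: "S \<subseteq> {..(CARD('a) - 1) ^ n}" using card_zeros_le by (auto simp: S_def)
  then have finS: "finite S" by (rule finite_subset) simp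
  obtain p0 where p0: "p0 \<in> lattice_pts n P" using ne by blast
  define c0 where "c0 = (\<lambda>p. if p = p0 then (1::'a) else 0)"
  have c0L: "c0 \<in> LP_coeffs TYPE('a) n P" using p0 by (auto simp: c0_def LP_coeffs_def)
  have c0nz: "\<exists>p. c0 p \<noteq> 0" by (auto simp: c0_def)
  have "zeros n P c0 = {}"
  proof -
    have "poly_eval n P c0 x \<noteq> 0" if "x \<in> torus n" for x
    proof -
      have "poly_eval n P c0 x = (\<Sum>p\<in>lattice_pts n P. if p = p0 then (\<Prod>i<n. x i ^ p i) else 0)"
        unfolding poly_eval_def c0_def by (rule sum.cong) simp_all
      also have "\<dots> = (\<Prod>i<n. x i ^ p0 i)" using fin p0 by simp
      also have "\<dots> \<noteq> 0" using that by (auto simp: torus_def)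
      finally show ?thesis .
    qed
    then show ?thesis by (auto simp: zeros_def)
  qed
  then have c0z: "card (zeros n P c0) = 0" by simp
  have c0S: "0 \<in> S" using c0L c0nz c0z unfolding S_def by (metis (mono_tags, lifting) mem_Collect_eq)
  then have Sne: "S \<noteq> {}" by blast
  show "card (zeros n P c) \<le> Nmax TYPE('a) n P" if "c \<in> LP_coeffs TYPE('a) n P" "\<exists>p. c p \<noteq> 0" for c
    unfolding NS by (rule Max_ge[OF finS]) (use that in \<open>auto simp: S_def\<close>)
  have "Max S \<in> S" by (rule Max_in[OF finS Sne])
  then show "\<exists>c. c \<in> LP_coeffs TYPE('a) n P \<and> (\<exists>p. c p \<noteq> 0) \<and> card (zeros n P c) = Nmax TYPE('a) n P"
    unfolding NS S_def by auto
  show "\<exists>c. c \<in> LP_coeffs TYPE('a) n P \<and> (\<exists>p. c p \<noteq> 0) \<and> card (zeros n P c) = 0"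
    using c0L c0nz c0z by blast
  show "Nmax TYPE('a) n P \<le> (CARD('a) - 1) ^ n"
    using \<open>Max S \<in> S\<close> Ssub NS by auto
qed

lemma lattice_ne:
  assumes "integral_polytope n P" "P \<subseteq> box q n"
  shows "lattice_pts n P \<noteq> {}"
proof -
  obtain V where V: "finite V" "V \<noteq> {}" "V \<subseteq> int_points n" "P = conv V"
    using assms(1) by (auto simp: integral_polytope_def)
  obtain v where v: "v \<in> V" using V(2) by blast
  have vP: "v \<in> P" using v V(4) conv_sub by blast
  have vb: "v \<in> box q n" using vP assms(2) by blast
  have vi: "v \<in> int_points n" using v V(3) by blast
  define p where "p = (\<lambda>i. nat \<lfloor>v i\<rfloor>)"
  have "(\<lambda>i. real (p i)) = v"
  proof
    fix i
    have vz: "v i \<in> \<int>" using vi by (simp add: int_points_def)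
    have "0 \<le> v i" using vb by (cases "i < n") (auto simp: box_def supp_lt_def)
    then show "real (p i) = v i" using vz unfolding p_def
      by (metis Ints_cases floor_of_int of_int_0_le_iff of_nat_nat)
  qed
  moreover have "supp_lt n p" using vb by (auto simp: box_def supp_lt_def p_def)
  ultimately have "p \<in> lattice_pts n P" using vP by (simp add: lattice_pts_def)
  then show ?thesis by blast
qed

lemma bilin:
  fixes a b NP NQ A B k :: int
  assumes "0 \<le> a" "a \<le> NP" "NP \<le> A" "0 \<le> b" "b \<le> NQ" "NQ \<le> B" "0 \<le> k"
  shows "k * a * b + (A - a) * (B - b) \<le> max (A * B) (k * NP * NQ + (A - NP) * (B - NQ))"
proof -
  define f where "f x y = k * x * y + (A - x) * (B - y)" for x y
  have d1: "f NP b - f a b = (NP - a) * ((k + 1) * b - B)" by (simp add: f_def algebra_simps)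
  have d2: "f 0 b - f a b = a * (B - (k + 1) * b)" by (simp add: f_def algebra_simps)
  have d3: "f NP NQ - f NP b = (NQ - b) * ((k + 1) * NP - A)" by (simp add: f_def algebra_simps)
  have d4: "f NP 0 - f NP b = b * (A - (k + 1) * NP)" by (simp add: f_def algebra_simps)
  have e1: "f NP 0 \<le> A * B"
  proof -
    have "0 \<le> NP * B" using assms by simp
    then show ?thesis by (simp add: f_def algebra_simps)
  qed
  have e2: "f 0 b \<le> A * B"
  proof -
    have "0 \<le> A * b" using assms by simp
    then show ?thesis by (simp add: f_def algebra_simps)
  qed
  have "f a b \<le> max (A * B) (f NP NQ)"
  proof (cases "(k + 1) * b - B \<ge> 0")
    case True
    have "0 \<le> (NP - a) * ((k + 1) * b - B)" using True assms by simp
    then have s1: "f a b \<le> f NP b" using d1 by linarith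
    show ?thesis
    proof (cases "(k + 1) * NP - A \<ge> 0")
      case True
      have "0 \<le> (NQ - b) * ((k + 1) * NP - A)" using True assms by simp
      then show ?thesis using d3 s1 by linarith
    next
      case False
      have "0 \<le> b * (A - (k + 1) * NP)" using False assms by simp
      then show ?thesis using d4 s1 e1 by linarith
    qed
  next
    case False
    have "0 \<le> a * (B - (k + 1) * b)" using False assms by simp
    then show ?thesis using d2 e2 by linarith
  qed
  then show ?thesis by (simp add: f_def)
qed

lemma max_div:
  fixes u v D :: real
  assumes "D > 0"
  shows "1 - max u v / D = min (1 - u / D) (1 - v / D)"
proof (cases "u \<le> v")
  case True
  then have "u / D \<le> v / D" using assms by (simp add: divide_right_mono)
  then show ?thesis using True by (simp add: max_def min_def)
next
  case False
  then have "v / D \<le> u / D" using assms by (simp add: divide_right_mono)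
  then show ?thesis using False by (simp add: max_def min_def)
qed

lemma comb_exists:
  assumes LJ: "lattice_pts (n + m + 1) J = lattice_pts n P \<union> shf n m ` lattice_pts m Q"
    and cP: "cP \<in> LP_coeffs TYPE('a::field) n P" and cQ: "cQ \<in> LP_coeffs TYPE('a) m Q"
  shows "\<exists>c. c \<in> LP_coeffs TYPE('a) (n + m + 1) J \<and> cL n P c = cP \<and> cR n m Q c = cQ \<and>
             ((\<exists>p. cP p \<noteq> 0) \<or> (\<exists>y. cQ y \<noteq> 0) \<longrightarrow> (\<exists>p. c p \<noteq> 0))"
proof -
  let ?LP = "lattice_pts n P" and ?LQ = "lattice_pts m Q"
  define unsh where "unsh r = (\<lambda>j. if j < m then r (n + j) else 0)" for r :: "nat \<Rightarrow> nat"
  define c where "c r = (if r \<in> ?LP then cP r else if r \<in> shf n m ` ?LQ then cQ (unsh r) else 0)" for r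
  have us: "unsh (shf n m y) = y" if "y \<in> ?LQ" for y
    using lattice_supp[OF that] by (auto simp: unsh_def shf_def supp_lt_def)
  have nLP: "shf n m y \<notin> ?LP" for y
  proof
    assume "shf n m y \<in> ?LP"
    then have "shf n m y (n + m) = 0" using lattice_supp by (auto simp: supp_lt_def)
    then show False by (simp add: shf_def)
  qed
  have cPz: "cP p = 0" if "p \<notin> ?LP" for p using cP that by (simp add: LP_coeffs_def)
  have cQz: "cQ y = 0" if "y \<notin> ?LQ" for y using cQ that by (simp add: LP_coeffs_def)
  have "c \<in> LP_coeffs TYPE('a) (n + m + 1) J" unfolding LP_coeffs_def LJ c_def by auto
  moreover have "cL n P c = cP" unfolding cL_def c_def using cPz by auto
  moreover have "cR n m Q c = cQ"
  proof
    fix y show "cR n m Q c y = cQ y"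
      by (cases "y \<in> ?LQ") (auto simp: cR_def c_def nLP us cQz)
  qed
  moreover have "(\<exists>p. cP p \<noteq> 0) \<or> (\<exists>y. cQ y \<noteq> 0) \<longrightarrow> (\<exists>p. c p \<noteq> 0)"
  proof
    assume "(\<exists>p. cP p \<noteq> 0) \<or> (\<exists>y. cQ y \<noteq> 0)"
    then show "\<exists>p. c p \<noteq> 0"
    proof
      assume "\<exists>p. cP p \<noteq> 0"
      then obtain p where p: "cP p \<noteq> 0" by blast
      then have "p \<in> ?LP" using cPz by blast
      then have "c p \<noteq> 0" using p by (simp add: c_def)
      then show ?thesis by blast
    next
      assume "\<exists>y. cQ y \<noteq> 0"
      then obtain y where y: "cQ y \<noteq> 0" by blast
      then have yL: "y \<in> ?LQ" using cQz by blast
      then have "c (shf n m y) \<noteq> 0" using y nLP us by (simp add: c_def)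
      then show ?thesis by blast
    qed
  qed
  ultimately show ?thesis by blast
qed

theorem mainTheorem4:
  fixes P Q :: "(nat \<Rightarrow> real) set" and n m :: nat
  assumes "CARD('a::{finite,field}) \<ge> 3"
    and "integral_polytope n P" and "P \<subseteq> box CARD('a) n"
    and "integral_polytope m Q" and "Q \<subseteq> box CARD('a) m"
  shows "int (Nmax TYPE('a) (n + m + 1) (join n m P Q)) =
           max (max (int ((CARD('a) - 1) ^ (n + m)))
                    (int (Nmax TYPE('a) n P * (CARD('a) - 1) ^ (m + 1))))
               (max (int (Nmax TYPE('a) m Q * (CARD('a) - 1) ^ (n + 1)))
                    ((int CARD('a) - 1) * int (Nmax TYPE('a) n P) * int (Nmax TYPE('a) m Q)
                     + (int ((CARD('a) - 1) ^ n) - int (Nmax TYPE('a) n P))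
                       * (int ((CARD('a) - 1) ^ m) - int (Nmax TYPE('a) m Q))))
       \<and> delta TYPE('a) (n + m + 1) (join n m P Q) =
           min (min (1 - 1 / (real CARD('a) - 1)) (delta TYPE('a) n P))
               (min (delta TYPE('a) m Q)
                    (delta TYPE('a) n P + delta TYPE('a) m Q
                     - delta TYPE('a) n P * delta TYPE('a) m Q * real CARD('a) / (real CARD('a) - 1)))"
proof -
  define J where "J = join n m P Q"
  define k where "k = CARD('a) - 1"
  have k2: "2 \<le> k" using assms(1) by (simp add: k_def)
  have LJ: "lattice_pts (n + m + 1) J = lattice_pts n P \<union> shf n m ` lattice_pts m Q"
    unfolding J_def by (rule lattice_join[OF assms(2) assms(3) assms(4) assms(5)])
  have fP: "finite (lattice_pts n P)" using assms(3) by (rule finite_lattice)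
  have fQ: "finite (lattice_pts m Q)" using assms(5) by (rule finite_lattice)
  have neP: "lattice_pts n P \<noteq> {}" using assms(2,3) by (rule lattice_ne)
  have neQ: "lattice_pts m Q \<noteq> {}" using assms(4,5) by (rule lattice_ne)
  have fJ: "finite (lattice_pts (n + m + 1) J)" using LJ fP fQ by simp
  have neJ: "lattice_pts (n + m + 1) J \<noteq> {}" using LJ neP by auto
  define NP where "NP = Nmax TYPE('a) n P"
  define NQ where "NQ = Nmax TYPE('a) m Q"
  define NJ where "NJ = Nmax TYPE('a) (n + m + 1) J"
  define A where "A = k ^ n"
  define B where "B = k ^ m"
  have NPA: "NP \<le> A" using Nmax_props(4)[OF fP neP] by (simp add: NP_def A_def k_def)
  have NQB: "NQ \<le> B" using Nmax_props(4)[OF fQ neQ] by (simp add: NQ_def B_def k_def)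
  have leP: "card (zeros n P c) \<le> NP" if "c \<in> LP_coeffs TYPE('a) n P" "\<exists>p. c p \<noteq> 0" for c
    using Nmax_props(1)[OF fP neP that] by (simp add: NP_def)
  have leQ: "card (zeros m Q c) \<le> NQ" if "c \<in> LP_coeffs TYPE('a) m Q" "\<exists>p. c p \<noteq> 0" for c
    using Nmax_props(1)[OF fQ neQ that] by (simp add: NQ_def)
  have leJ: "card (zeros (n + m + 1) J c) \<le> NJ" if "c \<in> LP_coeffs TYPE('a) (n + m + 1) J" "\<exists>p. c p \<noteq> 0" for c
    using Nmax_props(1)[OF fJ neJ that] by (simp add: NJ_def)
  have aA: "card (zeros n P (c :: (nat \<Rightarrow> nat) \<Rightarrow> 'a)) \<le> A" for c
    using card_zeros_le by (simp add: A_def k_def)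
  have bB: "card (zeros m Q (c :: (nat \<Rightarrow> nat) \<Rightarrow> 'a)) \<le> B" for c
    using card_zeros_le by (simp add: B_def k_def)
  have cardTn: "card (torus n :: (nat \<Rightarrow> 'a) set) = A" by (simp add: card_torus A_def k_def)
  have cardTm: "card (torus m :: (nat \<Rightarrow> 'a) set) = B" by (simp add: card_torus B_def k_def)
  define V where "V a b = int k * int a * int b + (int A - int a) * (int B - int b)" for a b :: nat
  have val: "int (card (zeros (n + m + 1) J c)) =
      V (card (zeros n P (cL n P c))) (card (zeros m Q (cR n m Q c)))" for c :: "(nat \<Rightarrow> nat) \<Rightarrow> 'a"
  proof -
    have e: "card (zeros (n + m + 1) J c) =
      k * card (zeros n P (cL n P c)) * card (zeros m Q (cR n m Q c))
     + (A - card (zeros n P (cL n P c))) * (B - card (zeros m Q (cR n m Q c)))"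
      using card_zeros_join[OF LJ fP fQ, of c] unfolding cardTn cardTm k_def .
    show ?thesis unfolding e V_def using aA[of "cL n P c"] bB[of "cR n m Q c"] by (simp add: of_nat_diff)
  qed
  define M where "M = max (max (int A * int B) (int NP * int k * int B))
                      (max (int NQ * int k * int A) (int k * int NP * int NQ + (int A - int NP) * (int B - int NQ)))"
  have upper: "int NJ \<le> M"
  proof -
    obtain cJ where cJ: "cJ \<in> LP_coeffs TYPE('a) (n + m + 1) J" "\<exists>p. cJ p \<noteq> 0"
        "card (zeros (n + m + 1) J cJ) = NJ"
      using Nmax_props(2)[OF fJ neJ] unfolding NJ_def by blast
    define a where "a = card (zeros n P (cL n P cJ))"
    define b where "b = card (zeros m Q (cR n m Q cJ))"
    have NJV: "int NJ = V a b" using val[of cJ] cJ(3) by (simp add: a_def b_def)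
    have ab: "a \<le> A" "b \<le> B" unfolding a_def b_def by (rule aA, rule bB)
    have cLin: "cL n P cJ \<in> LP_coeffs TYPE('a) n P" by (auto simp: cL_def LP_coeffs_def)
    have cRin: "cR n m Q cJ \<in> LP_coeffs TYPE('a) m Q" by (auto simp: cR_def LP_coeffs_def)
    have nz: "(\<exists>p. cL n P cJ p \<noteq> 0) \<or> (\<exists>y. cR n m Q cJ y \<noteq> 0)"
    proof -
      obtain p where p: "cJ p \<noteq> 0" using cJ(2) by blast
      then have "p \<in> lattice_pts (n + m + 1) J" using cJ(1) by (auto simp: LP_coeffs_def)
      then have "p \<in> lattice_pts n P \<or> p \<in> shf n m ` lattice_pts m Q" using LJ by blast
      then show ?thesis
      proof
        assume "p \<in> lattice_pts n P"
        then have "cL n P cJ p \<noteq> 0" using p by (simp add: cL_def)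
        then show ?thesis by blast
      next
        assume "p \<in> shf n m ` lattice_pts m Q"
        then obtain y where y: "y \<in> lattice_pts m Q" "p = shf n m y" by blast
        then have "cR n m Q cJ y \<noteq> 0" using p by (simp add: cR_def)
        then show ?thesis by blast
      qed
    qed
    have "V a b \<le> M"
    proof (cases "(\<exists>p. cL n P cJ p \<noteq> 0) \<and> (\<exists>y. cR n m Q cJ y \<noteq> 0)")
      case True
      then have aN: "a \<le> NP" and bN: "b \<le> NQ" using leP[OF cLin] leQ[OF cRin] by (auto simp: a_def b_def)
      have "V a b \<le> max (int A * int B) (int k * int NP * int NQ + (int A - int NP) * (int B - int NQ))"
        unfolding V_def by (rule bilin) (use aN bN NPA NQB in auto)
      then show ?thesis unfolding M_def by linarith
    next
      case False
      then have "(\<not> (\<exists>p. cL n P cJ p \<noteq> 0) \<and> (\<exists>y. cR n m Q cJ y \<noteq> 0))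
               \<or> ((\<exists>p. cL n P cJ p \<noteq> 0) \<and> \<not> (\<exists>y. cR n m Q cJ y \<noteq> 0))" using nz by blast
      then show ?thesis
      proof
        assume h: "\<not> (\<exists>p. cL n P cJ p \<noteq> 0) \<and> (\<exists>y. cR n m Q cJ y \<noteq> 0)"
        then have "cL n P cJ = (\<lambda>_. 0)" by auto
        then have aeq: "a = A" unfolding a_def by (simp add: zeros_zero cardTn)
        have bN: "b \<le> NQ" using h leQ[OF cRin] by (auto simp: b_def)
        have "V a b = int k * int A * int b" unfolding V_def aeq by simp
        also have "\<dots> \<le> int k * int A * int NQ" using bN by (simp add: mult_left_mono)
        finally show ?thesis unfolding M_def by (simp add: mult_ac)
      next
        assume h: "(\<exists>p. cL n P cJ p \<noteq> 0) \<and> \<not> (\<exists>y. cR n m Q cJ y \<noteq> 0)"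
        then have "cR n m Q cJ = (\<lambda>_. 0)" by auto
        then have beq: "b = B" unfolding b_def by (simp add: zeros_zero cardTm)
        have aN: "a \<le> NP" using h leP[OF cLin] by (auto simp: a_def)
        have "V a b = int k * int a * int B" unfolding V_def beq by simp
        also have "\<dots> \<le> int k * int NP * int B" using aN by (simp add: mult_left_mono mult_right_mono)
        finally show ?thesis unfolding M_def by (simp add: mult_ac)
      qed
    qed
    then show ?thesis using NJV by simp
  qed
  have low: "V (card (zeros n P cP)) (card (zeros m Q cQ)) \<le> int NJ"
    if hl: "cP \<in> LP_coeffs TYPE('a) n P" "cQ \<in> LP_coeffs TYPE('a) m Q" "(\<exists>p. cP p \<noteq> 0) \<or> (\<exists>y. cQ y \<noteq> 0)"
    for cP cQ
  proof -
    obtain c where c: "c \<in> LP_coeffs TYPE('a) (n + m + 1) J" "cL n P c = cP" "cR n m Q c = cQ"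
      "(\<exists>p. cP p \<noteq> 0) \<or> (\<exists>y. cQ y \<noteq> 0) \<longrightarrow> (\<exists>p. c p \<noteq> 0)"
      using comb_exists[OF LJ hl(1) hl(2)] by blast
    have "card (zeros (n + m + 1) J c) \<le> NJ" using leJ[OF c(1)] c(4) hl(3) by blast
    then have "int (card (zeros (n + m + 1) J c)) \<le> int NJ" by simp
    then show ?thesis using val[of c] c(2,3) by simp
  qed
  obtain cPm where cPm: "cPm \<in> LP_coeffs TYPE('a) n P" "\<exists>p. cPm p \<noteq> 0" "card (zeros n P cPm) = NP"
    using Nmax_props(2)[OF fP neP] unfolding NP_def by blast
  obtain cP0 where cP0: "cP0 \<in> LP_coeffs TYPE('a) n P" "\<exists>p. cP0 p \<noteq> 0" "card (zeros n P cP0) = 0"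
    using Nmax_props(3)[OF fP neP] by blast
  obtain cQm where cQm: "cQm \<in> LP_coeffs TYPE('a) m Q" "\<exists>p. cQm p \<noteq> 0" "card (zeros m Q cQm) = NQ"
    using Nmax_props(2)[OF fQ neQ] unfolding NQ_def by blast
  obtain cQ0 where cQ0: "cQ0 \<in> LP_coeffs TYPE('a) m Q" "\<exists>p. cQ0 p \<noteq> 0" "card (zeros m Q cQ0) = 0"
    using Nmax_props(3)[OF fQ neQ] by blast
  have zP: "(\<lambda>_. 0::'a) \<in> LP_coeffs TYPE('a) n P" by (simp add: LP_coeffs_def)
  have zQ: "(\<lambda>_. 0::'a) \<in> LP_coeffs TYPE('a) m Q" by (simp add: LP_coeffs_def)
  have zcP: "card (zeros n P (\<lambda>_. 0::'a)) = A" by (simp add: zeros_zero cardTn)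
  have zcQ: "card (zeros m Q (\<lambda>_. 0::'a)) = B" by (simp add: zeros_zero cardTm)
  have l1: "int A * int B \<le> int NJ" using low[OF cP0(1) cQ0(1)] cP0 cQ0 by (simp add: V_def)
  have l2: "int NP * int k * int B \<le> int NJ" using low[OF cPm(1) zQ] cPm zcQ by (simp add: V_def mult_ac)
  have l3: "int NQ * int k * int A \<le> int NJ" using low[OF zP cQm(1)] cQm zcP by (simp add: V_def mult_ac)
  have l4: "int k * int NP * int NQ + (int A - int NP) * (int B - int NQ) \<le> int NJ"
    using low[OF cPm(1) cQm(1)] cPm cQm by (simp add: V_def)
  have NJM: "int NJ = M" using upper l1 l2 l3 l4 unfolding M_def by simp
  have kq: "int CARD('a) - 1 = int k" using assms(1) by (simp add: k_def of_nat_diff)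
  have part1: "int NJ = max (max (int (k ^ (n + m))) (int (NP * k ^ (m + 1))))
               (max (int (NQ * k ^ (n + 1)))
                    (int k * int NP * int NQ + (int (k ^ n) - int NP) * (int (k ^ m) - int NQ)))"
    unfolding NJM M_def A_def B_def by (simp add: power_add mult_ac)
  define K where "K = real k"
  define a where "a = real A"
  define b where "b = real B"
  define x where "x = real NP"
  define y where "y = real NQ"
  have K2: "K \<ge> 2" using k2 by (simp add: K_def)
  have apos: "a > 0" using k2 by (simp add: a_def A_def)
  have bpos: "b > 0" using k2 by (simp add: b_def B_def)
  have aK: "a = K ^ n" by (simp add: a_def A_def K_def)
  have bK: "b = K ^ m" by (simp add: b_def B_def K_def)
  have rq: "real CARD('a) = K + 1" using assms(1) by (simp add: K_def k_def of_nat_diff)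
  define D where "D = K * a * b"
  have Dpos: "D > 0" using K2 apos bpos by (simp add: D_def)
  have dP: "delta TYPE('a) n P = (a - x) / a"
    by (simp add: delta_def a_def x_def NP_def A_def k_def)
  have dQ: "delta TYPE('a) m Q = (b - y) / b"
    by (simp add: delta_def b_def y_def NQ_def B_def k_def)
  have rNJ: "real NJ = max (max (a * b) (x * K * b)) (max (y * K * a) (K * x * y + (a - x) * (b - y)))"
  proof -
    have "real NJ = real_of_int (int NJ)" by simp
    also have "\<dots> = real_of_int M" by (simp add: NJM)
    also have "\<dots> = max (max (a * b) (x * K * b)) (max (y * K * a) (K * x * y + (a - x) * (b - y)))"
      unfolding M_def by (simp add: a_def b_def x_def y_def K_def of_int_max)
    finally show ?thesis .
  qed
  have dJ: "delta TYPE('a) (n + m + 1) J = 1 - real NJ / D"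
  proof -
    have "real ((CARD('a) - 1) ^ (n + m + 1)) = D" by (simp add: D_def aK bK K_def k_def power_add)
    then have "delta TYPE('a) (n + m + 1) J = (D - real NJ) / D" by (simp add: delta_def NJ_def)
    also have "\<dots> = 1 - real NJ / D" using Dpos by (simp add: diff_divide_distrib)
    finally show ?thesis .
  qed
  have t1: "1 - a * b / D = 1 - 1 / (real CARD('a) - 1)" using apos bpos K2 by (simp add: D_def rq)
  have t2: "1 - x * K * b / D = delta TYPE('a) n P" using apos bpos K2
    unfolding dP D_def by (simp add: field_simps)
  have t3: "1 - y * K * a / D = delta TYPE('a) m Q" using apos bpos K2
    unfolding dQ D_def by (simp add: field_simps)
  have t4: "1 - (K * x * y + (a - x) * (b - y)) / D =
      delta TYPE('a) n P + delta TYPE('a) m Q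
      - delta TYPE('a) n P * delta TYPE('a) m Q * real CARD('a) / (real CARD('a) - 1)"
    using apos bpos K2 unfolding dP dQ D_def rq by (simp add: field_simps)
  have part2: "delta TYPE('a) (n + m + 1) J =
           min (min (1 - 1 / (real CARD('a) - 1)) (delta TYPE('a) n P))
               (min (delta TYPE('a) m Q)
                    (delta TYPE('a) n P + delta TYPE('a) m Q
                     - delta TYPE('a) n P * delta TYPE('a) m Q * real CARD('a) / (real CARD('a) - 1)))"
    unfolding dJ rNJ max_div[OF Dpos] t1 t2 t3 t4 ..
  note g1 = part1[unfolded kq[symmetric], unfolded k_def NP_def NQ_def NJ_def J_def]
  note g2 = part2[unfolded J_def]
  show ?thesis using g1 g2 by (rule conjI)
qed

end
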